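(* Let $\delta\in(0,1)$ and suppose $$N \ge \frac{2}{(r/2)^d(\tfrac12-\eta)^2}\ln\left(\frac{1}{(r/2)^d(\tfrac12-\eta)^2\,\delta}\right)+1.$$ Then with probability at least $1-\delta$, after one synchronous best-response update, every sensor $i$ with $|w\cdot x_i|\ge r$ (i.e. at distance at least $r$ from the target separator) is in state $t(x_i)$.
   Context: Sensors $1,\dots,N$ have positions $x_1,\dots,x_N$ drawn i.i.d. uniformly from the unit ball $\{x\in\mathbb{R}^d:\|x\|\le 1\}$, $d\ge1$. The target separator is the hyperplane $\{x: w\cdot x=0\}$ for a fixed unit vector $w$, and the target label of $x$ is $t(x)=\mathrm{sign}(w\cdot x)$. Noise rate $\eta\in[0,1/2)$: conditional on the positions, the initial states in $\{+1,-1\}$ are independent across sensors, and sensor $i$'s initial state equals $t(x_i)$ with probability at least $1-\eta$. Communication radius $r\in(0,1]$: distinct sensors $i\ne j$ are neighbors if $\|x_i-x_j\|\le r$. A best-response update of sensor $i$ sets its state to the majority state among its neighbors' current states; in case of a tie (or no neighbors) the new state may be arbitrary. In a synchronous update, all sensors simultaneously perform a best-response update based on the initial states. *)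

theory Defs
  imports "HOL-Probability.Probability"
begin

text \<open>Sensors are indexed by 0..<N; a configuration of positions is X :: nat => 'a,
  a state vector is s :: nat => real with values in {1,-1}.\<close>

definition target_label :: "'a::euclidean_space \<Rightarrow> 'a \<Rightarrow> real" where
  "target_label w x = sgn (w \<bullet> x)"

definition neighbors :: "nat \<Rightarrow> real \<Rightarrow> (nat \<Rightarrow> 'a::euclidean_space) \<Rightarrow> nat \<Rightarrow> nat set" where
  "neighbors N r X i = {j. j < N \<and> j \<noteq> i \<and> norm (X i - X j) \<le> r}"

text \<open>v is a best-response (majority) state for sensor i given current states s;
  in case of a tie (or no neighbours) v is arbitrary in {1,-1}.\<close>
definition best_response ::
  "nat \<Rightarrow> real \<Rightarrow> (nat \<Rightarrow> 'a::euclidean_space) \<Rightarrow> (nat \<Rightarrow> real) \<Rightarrow> nat \<Rightarrow> real \<Rightarrow> bool" where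
  "best_response N r X s i v \<longleftrightarrow>
     v \<in> {1, -1} \<and>
     (card {j \<in> neighbors N r X i. s j = 1} > card {j \<in> neighbors N r X i. s j = -1} \<longrightarrow> v = 1) \<and>
     (card {j \<in> neighbors N r X i. s j = -1} > card {j \<in> neighbors N r X i. s j = 1} \<longrightarrow> v = -1)"

definition sync_update ::
  "nat \<Rightarrow> real \<Rightarrow> (nat \<Rightarrow> 'a::euclidean_space) \<Rightarrow> (nat \<Rightarrow> real) \<Rightarrow> (nat \<Rightarrow> real) \<Rightarrow> bool" where
  "sync_update N r X s s' \<longleftrightarrow> (\<forall>i<N. best_response N r X s i (s' i))"

definition pos_space :: "nat \<Rightarrow> (nat \<Rightarrow> 'a::euclidean_space) measure" where
  "pos_space N = PiM {..<N} (\<lambda>_. uniform_measure lborel (cball 0 1))"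

definition state_space :: "nat \<Rightarrow> (nat \<Rightarrow> real) measure" where
  "state_space N = PiM {..<N} (\<lambda>_. count_space UNIV)"

definition noise_kernel :: "nat \<Rightarrow> ((nat \<Rightarrow> 'a) \<Rightarrow> nat \<Rightarrow> real pmf) \<Rightarrow> (nat \<Rightarrow> 'a) \<Rightarrow> (nat \<Rightarrow> real) measure" where
  "noise_kernel N q X = PiM {..<N} (\<lambda>i. measure_pmf (q X i))"

definition joint_model :: "nat \<Rightarrow> ((nat \<Rightarrow> 'a::euclidean_space) \<Rightarrow> nat \<Rightarrow> real pmf) \<Rightarrow> ((nat \<Rightarrow> 'a) \<times> (nat \<Rightarrow> real)) measure" where
  "joint_model N q = pos_space N \<bind> (\<lambda>X. noise_kernel N q X \<bind>
       (\<lambda>s. return (pos_space N \<Otimes>\<^sub>M state_space N) (X, s)))"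

end

theory Submission
  imports Defs "HOL-Analysis.Analysis"
begin

lemma prob_U: "prob_space (uniform_measure lborel (cball (0::'a::euclidean_space) 1))"
  apply (rule prob_space_uniform_measure)
  by (auto simp: emeasure_lborel_cball_finite emeasure_cball dest: sym)
     (metis less_irrefl of_nat_0_le_iff unit_ball_vol_pos)

lemma prob_pos: "prob_space (pos_space N :: (nat \<Rightarrow> 'a::euclidean_space) measure)"
  unfolding pos_space_def by (intro prob_space_PiM prob_U)

lemma prob_K: "prob_space (noise_kernel N q X)"
  unfolding noise_kernel_def by (intro prob_space_PiM prob_space_measure_pmf)

lemma sets_K: "sets (noise_kernel N q X) = sets (state_space N)"
  unfolding noise_kernel_def state_space_def by (intro sets_PiM_cong) auto

lemma space_K: "space (noise_kernel N q X) = space (state_space N)"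
  using sets_K by (rule sets_eq_imp_space_eq)

lemma H_null: "w \<noteq> (0::'a::euclidean_space) \<Longrightarrow> {x. w \<bullet> x = 0} \<in> null_sets lborel"
  using negligible_hyperplane[of w 0]
  by (auto simp: null_sets_completion_iff negligible_iff_null_sets)


lemma joint_emeasure:
  fixes q :: "(nat \<Rightarrow> 'a::euclidean_space) \<Rightarrow> nat \<Rightarrow> real pmf"
  assumes q_meas: "noise_kernel N q \<in> measurable (pos_space N) (subprob_algebra (state_space N))"
    and A: "A \<in> sets (pos_space N \<Otimes>\<^sub>M state_space N)"
  shows "emeasure (joint_model N q) A =
    (\<integral>\<^sup>+X. emeasure (noise_kernel N q X) {s \<in> space (state_space N). (X, s) \<in> A} \<partial>pos_space N)"
proof -
  let ?P = "pos_space N \<Otimes>\<^sub>M state_space N"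
  have ne: "space (pos_space N :: (nat \<Rightarrow> 'a) measure) \<noteq> {}"
    using prob_space.not_empty[OF prob_pos] by blast
  have meas: "(\<lambda>X. noise_kernel N q X \<bind> (\<lambda>s. return ?P (X, s))) \<in> measurable (pos_space N) (subprob_algebra ?P)"
    by (rule measurable_bind[OF q_meas]) measurable
  have "emeasure (joint_model N q) A = (\<integral>\<^sup>+X. emeasure (noise_kernel N q X \<bind> (\<lambda>s. return ?P (X, s))) A \<partial>pos_space N)"
    unfolding joint_model_def by (rule emeasure_bind[OF ne meas A])
  also have "\<dots> = (\<integral>\<^sup>+X. emeasure (noise_kernel N q X) {s \<in> space (state_space N). (X, s) \<in> A} \<partial>pos_space N)"
  proof (rule nn_integral_cong)
    fix X :: "nat \<Rightarrow> 'a" assume X: "X \<in> space (pos_space N)"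
    have ne2: "space (noise_kernel N q X) \<noteq> {}"
      using prob_space.not_empty[OF prob_K] by blast
    have m2: "(\<lambda>s. (X, s)) \<in> measurable (noise_kernel N q X) ?P"
      using measurable_Pair1'[OF X] by (simp cong: measurable_cong_sets add: sets_K)
    show "emeasure (noise_kernel N q X \<bind> (\<lambda>s. return ?P (X, s))) A = emeasure (noise_kernel N q X) {s \<in> space (state_space N). (X, s) \<in> A}"
      by (subst bind_return_distr'[OF ne2 m2], subst emeasure_distr[OF m2 A])
         (auto simp: space_K intro!: arg_cong[where f="emeasure _"])
  qed
  finally show ?thesis .
qed

lemma ubv_ne[simp]: "unit_ball_vol (real n) \<noteq> 0"
  using unit_ball_vol_pos[of "real n"] by linarith

lemma ball_frac:
  fixes y :: "'a::euclidean_space"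
  assumes y: "norm y \<le> 1" and r: "0 < r" "r \<le> 1"
  shows "measure (uniform_measure lborel (cball (0::'a) 1)) (cball y r) \<ge> (r/2) ^ DIM('a)"
proof -
  define c where "c = (1 - r/2) *\<^sub>R y"
  have sub: "cball c (r/2) \<subseteq> cball 0 1 \<inter> cball y r"
  proof
    fix x assume x: "x \<in> cball c (r/2)"
    have "norm x \<le> norm c + r/2" using x norm_triangle_ineq2[of x c]
      by (auto simp: dist_norm norm_minus_commute)
    also have "norm c = (1 - r/2) * norm y" using r by (simp add: c_def)
    also have "(1 - r/2) * norm y + r/2 \<le> 1"
    proof -
      have "(1 - r/2) * norm y \<le> (1 - r/2) * 1" using r y by (intro mult_left_mono) auto
      thus ?thesis by simp
    qed
    finally have 1: "norm x \<le> 1" .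
    have "dist y x \<le> dist y c + dist c x" by (rule dist_triangle)
    also have "dist y c = r/2 * norm y"
    proof -
      have "y - c = (r/2) *\<^sub>R y" by (simp add: c_def algebra_simps)
      thus ?thesis using r by (simp add: dist_norm)
    qed
    also have "\<dots> \<le> r/2" using r y mult_left_mono[of "norm y" 1 "r/2"] by simp
    finally have 2: "dist y x \<le> r" using x by (simp add: dist_commute)
    show "x \<in> cball 0 1 \<inter> cball y r" using 1 2 by simp
  qed
  have v: "unit_ball_vol (real DIM('a)) > 0" by simp
  have "measure lborel (cball c (r/2)) \<le> measure lborel (cball 0 1 \<inter> cball y r)"
    apply (rule measure_mono_fmeasurable[OF sub])
    apply simp
    apply (rule fmeasurableI2[of "cball 0 1"])
     apply (simp add: fmeasurable_def emeasure_lborel_cball_finite[unfolded infinity_ennreal_def])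
    apply auto done
  hence "unit_ball_vol (real DIM('a)) * (r/2)^DIM('a) \<le> measure lborel (cball 0 1 \<inter> cball y r)"
    using r by (simp add: content_cball)
  moreover have "measure (uniform_measure lborel (cball (0::'a) 1)) (cball y r)
      = measure lborel (cball 0 1 \<inter> cball y r) / unit_ball_vol (real DIM('a))"
    by (subst measure_uniform_measure)
       (auto simp: emeasure_cball content_cball emeasure_lborel_cball_finite ubv_ne)
  ultimately show ?thesis using v by (simp add: le_divide_eq mult.commute)
qed

definition hfun :: "'a::euclidean_space \<Rightarrow> real \<Rightarrow> real \<Rightarrow> real \<Rightarrow> 'a \<Rightarrow> 'a \<Rightarrow> ennreal" where
  "hfun w r g z y x = (if norm (y - x) \<le> r then (if w \<bullet> x = 0 then ennreal z else ennreal g) else 1)"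

lemma hfun_meas[measurable]: "(\<lambda>x. hfun w r g z y x) \<in> borel_measurable borel"
  unfolding hfun_def by measurable

lemma h_int:
  fixes w y :: "'a::euclidean_space"
  assumes w: "w \<noteq> 0" and y: "norm y \<le> 1" and r: "0 < r" "r \<le> 1" and g: "0 \<le> g" "g \<le> 1"
  shows "(\<integral>\<^sup>+x. hfun w r g z y x \<partial>uniform_measure lborel (cball (0::'a) 1))
           \<le> ennreal (1 - (1 - g) * (r/2) ^ DIM('a))"
proof -
  let ?U = "uniform_measure lborel (cball (0::'a) 1)"
  interpret U: prob_space ?U by (rule prob_U)
  define H where "H = {x::'a. w \<bullet> x = 0}"
  have Hs: "H \<in> sets borel" unfolding H_def by measurable
  let ?f = "\<lambda>x. 1 - (1 - g) * indicator (cball y r) x :: real"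
  have ii: "integrable ?U (indicator (cball y r) :: 'a \<Rightarrow> real)"
    apply (rule integrable_real_indicator)
     apply simp
    by (metis U.emeasure_finite less_top infinity_ennreal_def)
  have int: "integrable ?U ?f"
    using ii by simp
  have "(\<integral>\<^sup>+x. hfun w r g z y x \<partial>?U) \<le> (\<integral>\<^sup>+x. ennreal (?f x) + ennreal z * indicator H x \<partial>?U)"
    by (intro nn_integral_mono) (auto simp: hfun_def H_def dist_norm indicator_def)
  also have "\<dots> = (\<integral>\<^sup>+x. ennreal (?f x) \<partial>?U) + ennreal z * emeasure ?U H"
    using Hs by (subst nn_integral_add) (measurable, auto simp: nn_integral_cmult_indicator)
  also have "emeasure ?U H = 0"
  proof -
    have "emeasure ?U H = emeasure lborel (cball 0 1 \<inter> H) / emeasure lborel (cball (0::'a) 1)"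
      using Hs by (subst emeasure_uniform_measure) auto
    also have "emeasure lborel (cball 0 1 \<inter> H) = 0"
    proof -
      have "H \<in> null_sets lborel" using H_null[OF w] by (simp add: H_def)
      hence "H \<in> sets lborel" "emeasure lborel H = 0" by (simp_all add: null_sets_def)
      thus ?thesis by (rule emeasure_eq_0) auto
    qed
    finally show ?thesis by simp
  qed
  also have "(\<integral>\<^sup>+x. ennreal (?f x) \<partial>?U) = ennreal (\<integral>x. ?f x \<partial>?U)"
    using g int by (intro nn_integral_eq_integral) (auto simp: indicator_def)
  also have "(\<integral>x. ?f x \<partial>?U) = 1 - (1 - g) * measure ?U (cball y r)"
    using ii U.prob_space by (subst Bochner_Integration.integral_diff) auto
  also have "\<dots> \<le> 1 - (1 - g) * (r/2) ^ DIM('a)"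
    using ball_frac[OF y r] g by (intro diff_left_mono mult_left_mono) auto
  finally show ?thesis by (simp add: ennreal_leI)
qed

lemma phi_int:
  fixes p :: "real pmf"
  assumes eta: "0 \<le> \<eta>" "\<eta> < 1/2" and pT: "pmf p T \<ge> 1 - \<eta>"
  shows "(\<integral>\<^sup>+v. ennreal (if v = T then 1 / (2*(1-\<eta>)) else 2*(1-\<eta>)) \<partial>measure_pmf p)
          \<le> ennreal (1/2 + 2*\<eta>*(1-\<eta>))"
proof -
  define z where "z = 2*(1-\<eta>)"
  have z: "z \<ge> 1" using eta by (simp add: z_def)
  have iz: "1/z \<le> z" using z by (smt (verit) divide_le_eq_1 le_divide_eq_1)
  have eq: "\<And>v. (if v = T then 1/z else z) = z + (1/z - z) * indicator {T} v"
    by (simp add: indicator_def)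
  have ii: "integrable (measure_pmf p) (indicator {T} :: real \<Rightarrow> real)"
    by (rule integrable_real_indicator) (auto simp: measure_pmf.emeasure_finite[unfolded infinity_ennreal_def] less_top[symmetric])
  have "(\<integral>\<^sup>+v. ennreal (if v = T then 1/z else z) \<partial>measure_pmf p)
      = ennreal (\<integral>v. z + (1/z - z) * indicator {T} v \<partial>measure_pmf p)"
    unfolding eq using z ii iz
    by (intro nn_integral_eq_integral) (simp, auto simp: indicator_def)
  also have "(\<integral>v. z + (1/z - z) * indicator {T} v \<partial>measure_pmf p) = z + (1/z - z) * pmf p T"
    using ii by (subst Bochner_Integration.integral_add) (auto simp: measure_pmf_single)
  also have "\<dots> \<le> z + (1/z - z) * (1 - \<eta>)"
    using iz pT by (intro add_left_mono mult_left_mono_neg) auto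
  also have "\<dots> = 1/2 + 2*\<eta>*(1-\<eta>)"
    using eta by (simp add: z_def field_simps)
  finally show ?thesis by (simp only: z_def) (meson ennreal_leI)
qed

lemma phi_int_triv:
  fixes p :: "real pmf"
  assumes z: "z \<ge> 1"
  shows "(\<integral>\<^sup>+v. ennreal (if v = T then 1 / z else z) \<partial>measure_pmf p) \<le> ennreal z"
proof -
  have iz: "1/z \<le> z" using z by (smt (verit) divide_le_eq_1 le_divide_eq_1)
  have "(\<integral>\<^sup>+v. ennreal (if v = T then 1 / z else z) \<partial>measure_pmf p) \<le> (\<integral>\<^sup>+v. ennreal z \<partial>measure_pmf p)"
    using iz by (intro nn_integral_mono) (auto intro: ennreal_leI)
  also have "\<dots> = ennreal z" by (simp add: measure_pmf.emeasure_space_1)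
  finally show ?thesis .
qed

lemma prod_ge1:
  fixes S :: "nat set" and s :: "nat \<Rightarrow> real" and z :: real
  assumes S: "finite S" and z: "z \<ge> 1" and T: "T \<noteq> -T"
    and c: "card {j\<in>S. s j = T} \<le> card {j\<in>S. s j = -T}"
  shows "1 \<le> (\<Prod>j\<in>S. if s j = T then 1/z else z)"
proof -
  define a where "a = card {j\<in>S. s j = T}"
  define b where "b = card (S \<inter> - {j. s j = T})"
  have sub: "{j\<in>S. s j = -T} \<subseteq> S \<inter> - {j. s j = T}" using T by auto
  have "card {j\<in>S. s j = -T} \<le> b" unfolding b_def using S by (intro card_mono[OF _ sub]) simp
  hence ab: "a \<le> b" using c unfolding a_def by linarith
  have e1: "S \<inter> {j. s j = T} = {j\<in>S. s j = T}" by blast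
  have P: "(\<Prod>j\<in>S. if s j = T then 1/z else z) = (1/z) ^ a * z ^ b"
    unfolding a_def b_def by (subst prod.If_cases[OF S]) (simp only: e1 prod_constant)
  have zb: "z ^ b = z ^ a * z ^ (b - a)" using ab by (metis le_add_diff_inverse power_add)
  have zne: "z \<noteq> 0" using z by linarith
  have "1/z * z = 1" using zne by simp
  hence za: "(1/z) ^ a * z ^ a = 1" by (simp flip: power_mult_distrib)
  have "(1/z) ^ a * z ^ b = z ^ (b - a)" unfolding zb using za by (metis mult.assoc mult_1)
  moreover have "1 \<le> z ^ (b - a)" by (rule one_le_power[OF z])
  ultimately show ?thesis using P by simp
qed

lemma sign_same:
  fixes w x y :: "'a::euclidean_space"
  assumes w: "norm w = 1" and far: "r \<le> \<bar>w \<bullet> x\<bar>" and d: "norm (x - y) \<le> r" and nz: "w \<bullet> y \<noteq> 0"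
  shows "sgn (w \<bullet> y) = sgn (w \<bullet> x)"
proof -
  have "\<bar>w \<bullet> (x - y)\<bar> \<le> norm w * norm (x - y)" by (rule Cauchy_Schwarz_ineq2)
  hence "\<bar>w \<bullet> x - w \<bullet> y\<bar> \<le> r" using w d by (simp add: inner_diff_right)
  thus ?thesis using far nz by (auto simp: sgn_real_def split: if_splits)
qed

lemma slice_bound:
  fixes q :: "(nat \<Rightarrow> 'a::euclidean_space) \<Rightarrow> nat \<Rightarrow> real pmf" and X :: "nat \<Rightarrow> 'a"
  assumes i: "i < N" and far: "r \<le> \<bar>w \<bullet> X i\<bar>" and r: "0 < r" and w: "norm w = 1"
    and eta: "0 \<le> \<eta>" "\<eta> < 1/2"
    and q_noise: "\<And>j. j < N \<Longrightarrow> w \<bullet> X j \<noteq> 0 \<Longrightarrow> pmf (q X j) (target_label w (X j)) \<ge> 1 - \<eta>"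
  shows "emeasure (noise_kernel N q X)
          {s \<in> space (state_space N).
             card {j \<in> neighbors N r X i. s j = target_label w (X i)}
               \<le> card {j \<in> neighbors N r X i. s j = - target_label w (X i)}}
        \<le> (\<Prod>j\<in>{..<N}. if j \<noteq> i then hfun w r (1/2 + 2*\<eta>*(1-\<eta>)) (2*(1-\<eta>)) (X i) (X j) else 1)"
proof -
  define T where "T = target_label w (X i)"
  define z where "z = 2*(1-\<eta>)"
  define g where "g = 1/2 + 2*\<eta>*(1-\<eta>)"
  define nb where "nb = neighbors N r X i"
  define S where "S = {s \<in> space (state_space N). card {j \<in> nb. s j = T} \<le> card {j \<in> nb. s j = - T}}"
  define \<phi> where "\<phi> = (\<lambda>j v. if j \<in> nb then (if v = T then 1/z else z) else (1::real))"
  have z: "z \<ge> 1" using eta by (simp add: z_def)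
  have iz: "1/z \<le> z" using z by (smt (verit) divide_le_eq_1 le_divide_eq_1)
  have iz0: "0 \<le> 1/z" using z by simp
  have wx: "w \<bullet> X i \<noteq> 0" using far r by auto
  have T: "T \<noteq> - T" using wx by (simp add: T_def target_label_def sgn_real_def)
  have nbfin: "finite nb" unfolding nb_def neighbors_def by simp
  interpret PS: product_sigma_finite "\<lambda>j. measure_pmf (q X j)"
    by unfold_locales
  have K: "noise_kernel N q X = PiM {..<N} (\<lambda>j. measure_pmf (q X j))" by (simp add: noise_kernel_def)
  have step1: "emeasure (noise_kernel N q X) S \<le> (\<integral>\<^sup>+s. (\<Prod>j\<in>{..<N}. ennreal (\<phi> j (s j))) \<partial>noise_kernel N q X)"
  proof (cases "S \<in> sets (noise_kernel N q X)")
    case False thus ?thesis by (simp add: emeasure_notin_sets)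
  next
    case True
    have "emeasure (noise_kernel N q X) S = (\<integral>\<^sup>+s. indicator S s \<partial>noise_kernel N q X)"
      using True by simp
    also have "\<dots> \<le> (\<integral>\<^sup>+s. (\<Prod>j\<in>{..<N}. ennreal (\<phi> j (s j))) \<partial>noise_kernel N q X)"
    proof (rule nn_integral_mono)
      fix s assume "s \<in> space (noise_kernel N q X)"
      show "indicator S s \<le> (\<Prod>j\<in>{..<N}. ennreal (\<phi> j (s j)))"
      proof (cases "s \<in> S")
        case False thus ?thesis by simp
      next
        case True
        have c: "card {j \<in> nb. s j = T} \<le> card {j \<in> nb. s j = - T}" using True by (simp add: S_def)
        have nbsub: "{..<N} \<inter> nb = nb" by (auto simp: nb_def neighbors_def)
        have "(\<Prod>j\<in>{..<N}. \<phi> j (s j)) = (\<Prod>j\<in>nb. if s j = T then 1/z else z)"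
          unfolding \<phi>_def by (subst prod.inter_restrict[symmetric]) (simp_all add: nbsub)
        hence ge: "1 \<le> (\<Prod>j\<in>{..<N}. \<phi> j (s j))" using prod_ge1[OF nbfin z T c] by simp
        have "(\<Prod>j\<in>{..<N}. ennreal (\<phi> j (s j))) = ennreal (\<Prod>j\<in>{..<N}. \<phi> j (s j))"
          by (rule prod_ennreal) (use z iz0 in \<open>auto simp: \<phi>_def\<close>)
        thus ?thesis using True ge by simp
      qed
    qed
    finally show ?thesis .
  qed
  have step2: "(\<integral>\<^sup>+s. (\<Prod>j\<in>{..<N}. ennreal (\<phi> j (s j))) \<partial>noise_kernel N q X)
      = (\<Prod>j\<in>{..<N}. \<integral>\<^sup>+v. ennreal (\<phi> j v) \<partial>measure_pmf (q X j))"
    unfolding K by (rule PS.product_nn_integral_prod) auto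
  have step3: "(\<integral>\<^sup>+v. ennreal (\<phi> j v) \<partial>measure_pmf (q X j))
      \<le> (if j \<noteq> i then hfun w r g z (X i) (X j) else 1)" if j: "j < N" for j
  proof (cases "j \<in> nb")
    case False
    hence "\<phi> j = (\<lambda>v. 1)" by (simp add: \<phi>_def fun_eq_iff)
    moreover have "j \<noteq> i \<Longrightarrow> \<not> norm (X i - X j) \<le> r" using False j by (auto simp: nb_def neighbors_def)
    ultimately show ?thesis by (simp add: measure_pmf.emeasure_space_1 hfun_def)
  next
    case True
    hence ji: "j \<noteq> i" and dj: "norm (X i - X j) \<le> r" by (auto simp: nb_def neighbors_def)
    have phi: "\<phi> j = (\<lambda>v. if v = T then 1/z else z)" using True by (simp add: \<phi>_def fun_eq_iff)
    show ?thesis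
    proof (cases "w \<bullet> X j = 0")
      case True
      thus ?thesis using ji dj phi_int_triv[OF z, where T=T and p="q X j"] by (simp add: phi hfun_def)
    next
      case False
      have "target_label w (X j) = T"
        using sign_same[OF w far dj False] by (simp add: T_def target_label_def)
      hence "pmf (q X j) T \<ge> 1 - \<eta>" using q_noise[OF j False] by simp
      from phi_int[OF eta this] show ?thesis using ji dj False
        unfolding phi hfun_def z_def g_def by simp
    qed
  qed
  have "emeasure (noise_kernel N q X) S \<le> (\<Prod>j\<in>{..<N}. if j \<noteq> i then hfun w r g z (X i) (X j) else 1)"
    using step1 step2 step3 prod_mono_ennreal
    by (smt (verit, ccfv_SIG) lessThan_iff order_trans)
  thus ?thesis unfolding S_def T_def nb_def g_def z_def .
qed

lemma F_meas:
  fixes w :: "'a::euclidean_space"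
  assumes i: "i < N"
  shows "(\<lambda>X. indicator {X. r \<le> \<bar>w \<bullet> X i\<bar>} X * (\<Prod>j\<in>{..<N}. if j \<noteq> i then hfun w r g z (X i) (X j) else 1))
     \<in> borel_measurable (pos_space N :: (nat \<Rightarrow> 'a) measure)"
proof -
  have i': "i \<in> {..<N}" using i by simp
  have "(\<lambda>X. if j \<noteq> i then hfun w r g z (X i) (X j) else 1) \<in> borel_measurable (pos_space N :: (nat \<Rightarrow> 'a) measure)"
    if j: "j \<in> {..<N}" for j
    unfolding pos_space_def hfun_def using i' j by measurable
  hence "(\<lambda>X. \<Prod>j\<in>{..<N}. if j \<noteq> i then hfun w r g z (X i) (X j) else 1) \<in> borel_measurable (pos_space N :: (nat \<Rightarrow> 'a) measure)"
    by (rule borel_measurable_prod_ennreal)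
  moreover have "(\<lambda>X. indicator {X. r \<le> \<bar>w \<bullet> X i\<bar>} X :: ennreal) \<in> borel_measurable (pos_space N :: (nat \<Rightarrow> 'a) measure)"
    unfolding pos_space_def using i' by measurable
  ultimately show ?thesis by measurable
qed

lemma pos_bound:
  fixes w :: "'a::euclidean_space"
  assumes i: "i < N" and w: "w \<noteq> 0" and r: "0 < r" "r \<le> 1" and g: "0 \<le> g" "g \<le> 1"
  shows "(\<integral>\<^sup>+X. indicator {X. r \<le> \<bar>w \<bullet> X i\<bar>} X * (\<Prod>j\<in>{..<N}. if j \<noteq> i then hfun w r g z (X i) (X j) else 1)
            \<partial>(pos_space N :: (nat \<Rightarrow> 'a) measure))
         \<le> ennreal ((1 - (1 - g) * (r/2) ^ DIM('a)) ^ (N - 1))"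
proof -
  let ?U = "uniform_measure lborel (cball (0::'a) 1)"
  define J where "J = {..<N} - {i}"
  define B where "B = 1 - (1 - g) * (r/2) ^ DIM('a)"
  have B0: "0 \<le> B"
  proof -
    have "(r/2) ^ DIM('a) \<le> 1" using r by (intro power_le_one) auto
    moreover have "0 \<le> (r/2) ^ DIM('a)" using r by simp
    ultimately have "(1 - g) * (r/2) ^ DIM('a) \<le> 1" using g by (intro mult_le_one) auto
    thus ?thesis by (simp add: B_def)
  qed
  have insJ: "insert i J = {..<N}" using i by (auto simp: J_def)
  have iJ: "i \<notin> J" "finite J" by (auto simp: J_def)
  have cJ: "card J = N - 1" using i by (simp add: J_def)
  interpret U: prob_space ?U by (rule prob_U)
  interpret PS: product_sigma_finite "\<lambda>_. ?U"
    by (intro product_sigma_finite.intro U.sigma_finite_measure_axioms)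
  define F where "F = (\<lambda>X::nat \<Rightarrow> 'a. indicator {X. r \<le> \<bar>w \<bullet> X i\<bar>} X * (\<Prod>j\<in>{..<N}. if j \<noteq> i then hfun w r g z (X i) (X j) else 1))"
  have Fm: "F \<in> borel_measurable (Pi\<^sub>M (insert i J) (\<lambda>_. ?U))"
    using F_meas[OF i, of r w g z] unfolding F_def insJ pos_space_def .
  have "(\<integral>\<^sup>+X. F X \<partial>pos_space N) = (\<integral>\<^sup>+X. F X \<partial>Pi\<^sub>M (insert i J) (\<lambda>_. ?U))"
    by (simp add: pos_space_def insJ)
  also have "\<dots> = (\<integral>\<^sup>+ y. (\<integral>\<^sup>+ x. F (x(i := y)) \<partial>(Pi\<^sub>M J (\<lambda>_. ?U))) \<partial>?U)"
    by (rule PS.product_nn_integral_insert_rev[OF iJ(2) iJ(1) Fm])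
  also have "\<dots> \<le> (\<integral>\<^sup>+ y. ennreal (B ^ (N - 1)) \<partial>?U)"
  proof (rule nn_integral_mono_AE)
    have "AE y in ?U. y \<in> cball 0 1" by (rule AE_uniform_measureI) auto
    thus "AE y in ?U. (\<integral>\<^sup>+ x. F (x(i := y)) \<partial>(Pi\<^sub>M J (\<lambda>_. ?U))) \<le> ennreal (B ^ (N - 1))"
    proof eventually_elim
      case (elim y)
      have Fe: "F (x(i := y)) = indicator {y. r \<le> \<bar>w \<bullet> y\<bar>} y * (\<Prod>j\<in>J. hfun w r g z y (x j))" for x
      proof -
        have "(\<Prod>j\<in>{..<N}. if j \<noteq> i then hfun w r g z ((x(i := y)) i) ((x(i := y)) j) else 1)
              = (\<Prod>j\<in>J. hfun w r g z y (x j))"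
        proof -
          let ?f = "\<lambda>j. if j \<noteq> i then hfun w r g z ((x(i := y)) i) ((x(i := y)) j) else 1"
          have "(\<Prod>j\<in>{..<N}. ?f j) = ?f i * (\<Prod>j\<in>J. ?f j)"
            unfolding insJ[symmetric] by (rule prod.insert[OF iJ(2) iJ(1)])
          also have "\<dots> = (\<Prod>j\<in>J. hfun w r g z y (x j))"
            using iJ(1) by (auto intro!: prod.cong)
          finally show ?thesis .
        qed
        thus ?thesis by (simp add: F_def indicator_def)
      qed
      have "(\<integral>\<^sup>+ x. F (x(i := y)) \<partial>(Pi\<^sub>M J (\<lambda>_. ?U)))
          = indicator {y. r \<le> \<bar>w \<bullet> y\<bar>} y * (\<integral>\<^sup>+ x. (\<Prod>j\<in>J. hfun w r g z y (x j)) \<partial>(Pi\<^sub>M J (\<lambda>_. ?U)))"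
        unfolding Fe by (rule nn_integral_cmult) measurable
      also have "\<dots> = indicator {y. r \<le> \<bar>w \<bullet> y\<bar>} y * (\<Prod>j\<in>J. \<integral>\<^sup>+x. hfun w r g z y x \<partial>?U)"
        by (subst PS.product_nn_integral_prod) (auto simp: iJ)
      also have "\<dots> \<le> ennreal (B ^ (N - 1))"
      proof (cases "r \<le> \<bar>w \<bullet> y\<bar>")
        case False thus ?thesis by simp
      next
        case True
        have "(\<Prod>j\<in>J. \<integral>\<^sup>+x. hfun w r g z y x \<partial>?U) \<le> (\<Prod>j\<in>J. ennreal B)"
          using h_int[OF w _ r g, of y z] elim by (intro prod_mono_ennreal) (simp add: B_def)
        also have "\<dots> = ennreal (B ^ (N - 1))" using B0 by (simp add: cJ ennreal_power)
        finally show ?thesis using True by simp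
      qed
      finally show ?case .
    qed
  qed
  also have "\<dots> = ennreal (B ^ (N - 1))" by (subst nn_integral_const) (simp only: U.emeasure_space_1 mult_1_right)
  finally show ?thesis by (simp add: F_def B_def)
qed

lemma snd_comp_meas[measurable]:
  assumes "j \<in> {..<N}"
  shows "(\<lambda>p. snd p j) \<in> borel_measurable (pos_space N \<Otimes>\<^sub>M state_space N :: ((nat \<Rightarrow> 'a::euclidean_space) \<times> _) measure)"
proof -
  have "(\<lambda>p. snd p j) \<in> measurable (pos_space N \<Otimes>\<^sub>M state_space N :: ((nat \<Rightarrow> 'a) \<times> _) measure) (count_space UNIV)"
    apply (rule measurable_compose[OF measurable_snd])
    unfolding state_space_def using measurable_component_singleton[OF assms, of "\<lambda>_. count_space UNIV"] by simp
  from measurable_comp[OF this, of "\<lambda>x. x" borel] show ?thesis by (simp add: comp_def)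
qed

lemma fst_comp_meas[measurable]:
  assumes "j \<in> {..<N}"
  shows "(\<lambda>p. fst p j) \<in> borel_measurable (pos_space N \<Otimes>\<^sub>M state_space N :: ((nat \<Rightarrow> 'a::euclidean_space) \<times> _) measure)"
  unfolding pos_space_def using assms by measurable

lemma card_nb_sum:
  "real (card {j \<in> neighbors N r X i. s j = v}) =
     (\<Sum>j<N. if j \<noteq> i \<and> norm (X i - X j) \<le> r \<and> s j = v then 1 else 0)"
proof -
  have "{j \<in> neighbors N r X i. s j = v} = {j \<in> {..<N}. j \<noteq> i \<and> norm (X i - X j) \<le> r \<and> s j = v}"
    by (auto simp: neighbors_def)
  hence "real (card {j \<in> neighbors N r X i. s j = v}) = (\<Sum>j\<in>{j \<in> {..<N}. j \<noteq> i \<and> norm (X i - X j) \<le> r \<and> s j = v}. 1)"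
    by simp
  also have "\<dots> = (\<Sum>j<N. if j \<noteq> i \<and> norm (X i - X j) \<le> r \<and> s j = v then 1 else 0)"
    by (rule sum.inter_filter) simp
  finally show ?thesis .
qed

definition Bad :: "nat \<Rightarrow> real \<Rightarrow> 'a::euclidean_space \<Rightarrow> nat \<Rightarrow> ((nat \<Rightarrow> 'a) \<times> (nat \<Rightarrow> real)) set" where
  "Bad N r w i = {p \<in> space (pos_space N \<Otimes>\<^sub>M state_space N). r \<le> \<bar>w \<bullet> fst p i\<bar> \<and>
      card {j \<in> neighbors N r (fst p) i. snd p j = target_label w (fst p i)}
        \<le> card {j \<in> neighbors N r (fst p) i. snd p j = - target_label w (fst p i)}}"

lemma coll_conj: "{x \<in> S. P x \<and> Q x} = {x \<in> S. P x} \<inter> {x \<in> S. Q x}" by blast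

lemma t3: "i \<in> {..<N} \<Longrightarrow> j \<in> {..<N} \<Longrightarrow> (\<lambda>p. if j \<noteq> i \<and> norm (fst p i - fst p j) \<le> r \<and> snd p j = c * sgn (w \<bullet> fst p i) then 1 else 0::real) \<in> borel_measurable (pos_space N \<Otimes>\<^sub>M state_space N :: ((nat \<Rightarrow> 'a::euclidean_space) \<times> _) measure)"
  by measurable

lemma Bad_sets:
  assumes i: "i < N"
  shows "Bad N r w i \<in> sets (pos_space N \<Otimes>\<^sub>M state_space N)"
proof -
  have i': "i \<in> {..<N}" using i by simp
  have "Bad N r w i = {p \<in> space (pos_space N \<Otimes>\<^sub>M state_space N). r \<le> \<bar>w \<bullet> fst p i\<bar> \<and>
      (\<Sum>j<N. if j \<noteq> i \<and> norm (fst p i - fst p j) \<le> r \<and> snd p j = target_label w (fst p i) then 1 else 0::real)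
        \<le> (\<Sum>j<N. if j \<noteq> i \<and> norm (fst p i - fst p j) \<le> r \<and> snd p j = - target_label w (fst p i) then 1 else 0)}"
    unfolding Bad_def card_nb_sum[symmetric] by simp
  also have "\<dots> \<in> sets (pos_space N \<Otimes>\<^sub>M state_space N)"
  proof -
    have f1[measurable]: "(\<lambda>p. \<Sum>j<N. if j \<noteq> i \<and> norm (fst p i - fst p j) \<le> r \<and> snd p j = c * sgn (w \<bullet> fst p i) then 1 else 0::real)
      \<in> borel_measurable (pos_space N \<Otimes>\<^sub>M state_space N)" for c
      by (rule borel_measurable_sum) (rule t3[OF i'], simp)
    have e: "\<And>p. target_label w (fst p i) = 1 * sgn (w \<bullet> fst p i)" "\<And>p. - target_label w (fst p i) = (-1) * sgn (w \<bullet> fst p i)"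
      by (simp_all add: target_label_def)
    let ?P = "pos_space N \<Otimes>\<^sub>M state_space N :: ((nat \<Rightarrow> 'a) \<times> _) measure"
    have s1: "{p \<in> space ?P. r \<le> \<bar>w \<bullet> fst p i\<bar>} \<in> sets ?P" using i' by measurable
    have s2: "{p \<in> space ?P. (\<Sum>j<N. if j \<noteq> i \<and> norm (fst p i - fst p j) \<le> r \<and> snd p j = 1 * sgn (w \<bullet> fst p i) then 1 else 0::real)
       \<le> (\<Sum>j<N. if j \<noteq> i \<and> norm (fst p i - fst p j) \<le> r \<and> snd p j = (-1) * sgn (w \<bullet> fst p i) then 1 else 0::real)} \<in> sets ?P"
      by (rule borel_measurable_le[OF f1 f1])
    have e2: "\<And>x::real. - (1 * x) = (-1) * x" by simp
    show ?thesis unfolding e(1) e2 coll_conj using sets.Int[OF s1 s2] .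
  qed
  finally show ?thesis .
qed

lemma Bad_bound:
  fixes w :: "'a::euclidean_space" and q :: "(nat \<Rightarrow> 'a) \<Rightarrow> nat \<Rightarrow> real pmf"
  assumes i: "i < N" and w: "norm w = 1" and r: "0 < r" "r \<le> 1" and eta: "0 \<le> \<eta>" "\<eta> < 1/2"
    and q_noise: "\<And>X j. j < N \<Longrightarrow> w \<bullet> X j \<noteq> 0 \<Longrightarrow> pmf (q X j) (target_label w (X j)) \<ge> 1 - \<eta>"
    and q_meas: "noise_kernel N q \<in> measurable (pos_space N) (subprob_algebra (state_space N))"
  shows "emeasure (joint_model N q) (Bad N r w i)
          \<le> ennreal ((1 - (1 - (1/2 + 2*\<eta>*(1-\<eta>))) * (r/2) ^ DIM('a)) ^ (N - 1))"
proof -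
  define g where "g = 1/2 + 2*\<eta>*(1-\<eta>)"
  define z where "z = 2*(1-\<eta>)"
  have sq: "(2*\<eta>-1)^2 = 4*(\<eta>*\<eta>) - 4*\<eta> + 1" by (simp add: power2_eq_square algebra_simps)
  have "0 \<le> (2*\<eta>-1)^2" by simp
  hence "2*\<eta>*(1-\<eta>) \<le> 1/2" unfolding sq by (simp add: algebra_simps)
  moreover have "0 \<le> 2*\<eta>*(1-\<eta>)" using eta by simp
  ultimately have g: "0 \<le> g" "g \<le> 1" unfolding g_def by linarith+
  have w0: "w \<noteq> 0" using w by auto
  have "emeasure (joint_model N q) (Bad N r w i) =
    (\<integral>\<^sup>+X. emeasure (noise_kernel N q X) {s \<in> space (state_space N). (X, s) \<in> Bad N r w i} \<partial>pos_space N)"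
    by (rule joint_emeasure[OF q_meas Bad_sets[OF i]])
  also have "\<dots> \<le> (\<integral>\<^sup>+X. indicator {X. r \<le> \<bar>w \<bullet> X i\<bar>} X * (\<Prod>j\<in>{..<N}. if j \<noteq> i then hfun w r g z (X i) (X j) else 1) \<partial>pos_space N)"
  proof (rule nn_integral_mono)
    fix X :: "nat \<Rightarrow> 'a" assume X: "X \<in> space (pos_space N)"
    show "emeasure (noise_kernel N q X) {s \<in> space (state_space N). (X, s) \<in> Bad N r w i}
        \<le> indicator {X. r \<le> \<bar>w \<bullet> X i\<bar>} X * (\<Prod>j\<in>{..<N}. if j \<noteq> i then hfun w r g z (X i) (X j) else 1)"
    proof (cases "r \<le> \<bar>w \<bullet> X i\<bar>")
      case False
      hence e: "{s \<in> space (state_space N). (X, s) \<in> Bad N r w i} = {}" by (auto simp: Bad_def)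
      show ?thesis unfolding e by simp
    next
      case True
      have "{s \<in> space (state_space N). (X, s) \<in> Bad N r w i} =
        {s \<in> space (state_space N).
             card {j \<in> neighbors N r X i. s j = target_label w (X i)}
               \<le> card {j \<in> neighbors N r X i. s j = - target_label w (X i)}}"
        using X True by (auto simp: Bad_def space_pair_measure)
      moreover have "emeasure (noise_kernel N q X) {s \<in> space (state_space N).
             card {j \<in> neighbors N r X i. s j = target_label w (X i)}
               \<le> card {j \<in> neighbors N r X i. s j = - target_label w (X i)}}
        \<le> (\<Prod>j\<in>{..<N}. if j \<noteq> i then hfun w r g z (X i) (X j) else 1)"
        unfolding g_def z_def by (rule slice_bound[where q=q and X=X, OF i True r(1) w eta q_noise])
      ultimately show ?thesis using True by simp
    qed
  qed
  also have "\<dots> \<le> ennreal ((1 - (1 - g) * (r/2) ^ DIM('a)) ^ (N - 1))"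
    by (rule pos_bound[OF i w0 r g])
  finally show ?thesis unfolding g_def .
qed

lemma final_arith:
  fixes a \<delta> :: real and N :: nat
  assumes a: "0 < a" "a \<le> 1/2" and d: "0 < \<delta>" "\<delta> < 1"
    and NL: "real N \<ge> 2 / a * ln (1 / (a * \<delta>)) + 1"
  shows "real N * (1 - 2*a) ^ (N - 1) \<le> \<delta>"
proof -
  define L where "L = ln (1 / (a * \<delta>))"
  have ad: "0 < a * \<delta>" "a * \<delta> \<le> 1" using a d by (auto intro: mult_le_one)
  have L0: "0 \<le> L" unfolding L_def using ad by simp
  have "0 \<le> 2 / a * L" using a L0 by simp
  hence N1: "N \<ge> 1" using NL unfolding L_def by linarith
  define n where "n = N - 1"
  have Nn: "real N = real n + 1" using N1 by (simp add: n_def)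
  have nL: "real n \<ge> 2 / a * L" using NL Nn unfolding L_def by linarith
  hence anL: "a * real n \<ge> 2 * L" using a by (simp add: field_simps)
  have "(1 - 2*a) ^ n \<le> exp (-2*a) ^ n"
    using a by (intro power_mono) (use exp_ge_add_one_self[of "-2*a"] in auto)
  also have "\<dots> = exp (-(a * real n)) * exp (-(a * real n))"
    by (simp flip: exp_of_nat_mult exp_add)
  finally have p: "(1 - 2*a) ^ n \<le> exp (-(a * real n)) * exp (-(a * real n))" .
  have e1: "real N * exp (-(a * real n)) \<le> 1 / a"
  proof -
    have "a * real N \<le> 1 + a * real n" using Nn a by (simp add: algebra_simps)
    also have "\<dots> \<le> exp (a * real n)" by (rule exp_ge_add_one_self)
    finally have "a * real N \<le> exp (a * real n)" .
    thus ?thesis using a by (simp add: exp_minus field_simps)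
  qed
  have e2: "exp (-(a * real n)) \<le> a * \<delta>"
  proof -
    have "exp (-(a * real n)) \<le> exp (-L)" using anL L0 by simp
    also have "exp (-L) = a * \<delta>" unfolding L_def using ad a d by (simp add: ln_div exp_minus)
    finally show ?thesis .
  qed
  have "real N * (1 - 2*a) ^ (N - 1) \<le> real N * (exp (-(a * real n)) * exp (-(a * real n)))"
    using p unfolding n_def by (intro mult_left_mono) auto
  also have "\<dots> = (real N * exp (-(a * real n))) * exp (-(a * real n))" by simp
  also have "\<dots> \<le> (1 / a) * (a * \<delta>)"
    using e1 e2 a by (intro mult_mono) auto
  also have "\<dots> = \<delta>" using a by simp
  finally show ?thesis .
qed

lemma good_iff:
  assumes r: "0 < r"
  shows "(\<forall>s'. sync_update N r X s s' \<longrightarrow> (\<forall>i<N. \<bar>w \<bullet> X i\<bar> \<ge> r \<longrightarrow> s' i = target_label w (X i)))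
    \<longleftrightarrow> (\<forall>i<N. r \<le> \<bar>w \<bullet> X i\<bar> \<longrightarrow>
          \<not> card {j \<in> neighbors N r X i. s j = target_label w (X i)}
               \<le> card {j \<in> neighbors N r X i. s j = - target_label w (X i)})"
  (is "?L \<longleftrightarrow> ?R")
proof
  assume L: ?L
  show ?R
  proof (intro allI impI)
    fix i assume i: "i < N" and far: "r \<le> \<bar>w \<bullet> X i\<bar>"
    define T where "T = target_label w (X i)"
    have T: "T = 1 \<or> T = -1" using far r by (auto simp: T_def target_label_def sgn_real_def)
    show "\<not> card {j \<in> neighbors N r X i. s j = target_label w (X i)}
               \<le> card {j \<in> neighbors N r X i. s j = - target_label w (X i)}"
    proof
      assume c: "card {j \<in> neighbors N r X i. s j = target_label w (X i)}
               \<le> card {j \<in> neighbors N r X i. s j = - target_label w (X i)}"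
      define s' where "s' = (\<lambda>k. if k = i then - T else
          (if card {j \<in> neighbors N r X k. s j = -1} \<le> card {j \<in> neighbors N r X k. s j = 1} then 1 else -1::real))"
      have "sync_update N r X s s'"
        unfolding sync_update_def
      proof (intro allI impI)
        fix k assume "k < N"
        show "best_response N r X s k (s' k)"
        proof (cases "k = i")
          case True
          thus ?thesis using T c unfolding best_response_def s'_def T_def by auto
        next
          case False
          thus ?thesis unfolding best_response_def s'_def by auto
        qed
      qed
      hence "s' i = T" using L i far by (auto simp: T_def)
      thus False using T by (auto simp: s'_def)
    qed
  qed
next
  assume R: ?R
  show ?L
  proof (intro allI impI)
    fix s' i assume su: "sync_update N r X s s'" and i: "i < N" and far: "r \<le> \<bar>w \<bullet> X i\<bar>"
    define T where "T = target_label w (X i)"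
    have T: "T = 1 \<or> T = -1" using far r by (auto simp: T_def target_label_def sgn_real_def)
    have br: "best_response N r X s i (s' i)" using su i by (simp add: sync_update_def)
    have c: "card {j \<in> neighbors N r X i. s j = T} > card {j \<in> neighbors N r X i. s j = - T}"
      using R i far by (simp add: T_def not_le)
    show "s' i = target_label w (X i)"
      using T c br unfolding best_response_def T_def[symmetric] by auto
  qed
qed

lemma joint_props:
  fixes q :: "(nat \<Rightarrow> 'a::euclidean_space) \<Rightarrow> nat \<Rightarrow> real pmf"
  assumes q_meas: "noise_kernel N q \<in> measurable (pos_space N) (subprob_algebra (state_space N))"
  shows "sets (joint_model N q) = sets (pos_space N \<Otimes>\<^sub>M state_space N)"
    and "prob_space (joint_model N q)"
proof -
  let ?P = "pos_space N \<Otimes>\<^sub>M state_space N"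
  have ne: "space (pos_space N :: (nat \<Rightarrow> 'a) measure) \<noteq> {}"
    using prob_space.not_empty[OF prob_pos] by blast
  have meas: "(\<lambda>X. noise_kernel N q X \<bind> (\<lambda>s. return ?P (X, s))) \<in> measurable (pos_space N) (subprob_algebra ?P)"
    by (rule measurable_bind[OF q_meas]) measurable
  have inner_sets: "sets (noise_kernel N q X \<bind> (\<lambda>s. return ?P (X, s))) = sets ?P" for X :: "nat \<Rightarrow> 'a"
  proof -
    have ne2: "space (noise_kernel N q X) \<noteq> {}"
      using prob_space.not_empty[OF prob_K] by blast
    show ?thesis by (rule sets_bind[OF _ ne2]) simp
  qed
  show "sets (joint_model N q) = sets ?P"
    unfolding joint_model_def by (rule sets_bind[OF inner_sets ne])
  show "prob_space (joint_model N q)"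
    unfolding joint_model_def
  proof (rule prob_space.prob_space_bind[OF prob_pos _ meas])
    show "AE X in pos_space N. prob_space (noise_kernel N q X \<bind> (\<lambda>s. return ?P (X, s)))"
    proof (rule AE_I2)
      fix X :: "nat \<Rightarrow> 'a" assume X: "X \<in> space (pos_space N)"
      have m2: "(\<lambda>s. return ?P (X, s)) \<in> measurable (noise_kernel N q X) (subprob_algebra ?P)"
        using measurable_compose[OF measurable_Pair1'[OF X] return_measurable]
        by (simp cong: measurable_cong_sets add: sets_K)
      show "prob_space (noise_kernel N q X \<bind> (\<lambda>s. return ?P (X, s)))"
        apply (rule prob_space.prob_space_bind[OF prob_K _ m2])
        apply (rule AE_I2, rule prob_space_return)
        using X by (simp add: space_pair_measure space_K)
    qed
  qed
qed

theorem theorem2: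
  fixes w :: "'a::euclidean_space"
    and N :: nat and r \<eta> \<delta> :: real
    and q :: "(nat \<Rightarrow> 'a) \<Rightarrow> nat \<Rightarrow> real pmf"
  assumes w_unit: "norm w = 1"
    and r: "0 < r" "r \<le> 1"
    and eta: "0 \<le> \<eta>" "\<eta> < 1/2"
    and delta: "0 < \<delta>" "\<delta> < 1"
    and q_vals: "\<And>X i. i < N \<Longrightarrow> set_pmf (q X i) \<subseteq> {1, -1}"
    and q_noise: "\<And>X i. i < N \<Longrightarrow> w \<bullet> X i \<noteq> 0 \<Longrightarrow>
                    pmf (q X i) (target_label w (X i)) \<ge> 1 - \<eta>"
    and q_meas: "noise_kernel N q \<in> measurable (pos_space N) (subprob_algebra (state_space N))"
    and N_large: "real N \<ge> 2 / ((r/2) ^ DIM('a) * (1/2 - \<eta>)^2)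
                     * ln (1 / ((r/2) ^ DIM('a) * (1/2 - \<eta>)^2 * \<delta>)) + 1"
  shows "measure (joint_model N q)
           {(X, s) \<in> space (joint_model N q).
              \<forall>s'. sync_update N r X s s' \<longrightarrow>
                 (\<forall>i<N. \<bar>w \<bullet> X i\<bar> \<ge> r \<longrightarrow> s' i = target_label w (X i))}
         \<ge> 1 - \<delta>"
proof -
  let ?J = "joint_model N q"
  let ?P = "pos_space N \<Otimes>\<^sub>M state_space N :: ((nat \<Rightarrow> 'a) \<times> (nat \<Rightarrow> real)) measure"
  interpret J: prob_space ?J by (rule joint_props(2)[OF q_meas])
  have setsJ: "sets ?J = sets ?P" by (rule joint_props(1)[OF q_meas])
  have spJ: "space ?J = space ?P" using setsJ by (rule sets_eq_imp_space_eq)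
  define a where "a = (r/2) ^ DIM('a) * (1/2 - \<eta>)^2"
  define U where "U = (\<Union>i\<in>{..<N}. Bad N r w i)"
  have BadJ: "Bad N r w i \<in> sets ?J" if "i < N" for i using Bad_sets[OF that] setsJ by simp
  have UJ: "U \<in> sets ?J" unfolding U_def using BadJ by auto
  have Ev: "{(X, s) \<in> space ?J.
              \<forall>s'. sync_update N r X s s' \<longrightarrow>
                 (\<forall>i<N. \<bar>w \<bullet> X i\<bar> \<ge> r \<longrightarrow> s' i = target_label w (X i))} = space ?J - U"
  proof (intro set_eqI iffI)
    fix p assume "p \<in> {(X, s) \<in> space ?J.
              \<forall>s'. sync_update N r X s s' \<longrightarrow>
                 (\<forall>i<N. \<bar>w \<bullet> X i\<bar> \<ge> r \<longrightarrow> s' i = target_label w (X i))}"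
    then obtain X s where p: "p = (X, s)" "(X, s) \<in> space ?J"
      and g: "\<forall>s'. sync_update N r X s s' \<longrightarrow>
                 (\<forall>i<N. \<bar>w \<bullet> X i\<bar> \<ge> r \<longrightarrow> s' i = target_label w (X i))" by blast
    from g[unfolded good_iff[OF r(1)]] have "p \<notin> U" unfolding U_def Bad_def p by auto
    thus "p \<in> space ?J - U" using p by simp
  next
    fix p assume pU: "p \<in> space ?J - U"
    obtain X s where p: "p = (X, s)" by (cases p)
    have "\<forall>i<N. r \<le> \<bar>w \<bullet> X i\<bar> \<longrightarrow>
          \<not> card {j \<in> neighbors N r X i. s j = target_label w (X i)}
               \<le> card {j \<in> neighbors N r X i. s j = - target_label w (X i)}"
      using pU unfolding U_def Bad_def p spJ by auto
    hence "\<forall>s'. sync_update N r X s s' \<longrightarrow>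
                 (\<forall>i<N. \<bar>w \<bullet> X i\<bar> \<ge> r \<longrightarrow> s' i = target_label w (X i))"
      using good_iff[OF r(1)] by blast
    thus "p \<in> {(X, s) \<in> space ?J.
              \<forall>s'. sync_update N r X s s' \<longrightarrow>
                 (\<forall>i<N. \<bar>w \<bullet> X i\<bar> \<ge> r \<longrightarrow> s' i = target_label w (X i))}"
      using pU p by simp
  qed
  have p1: "(r/2) ^ DIM('a) \<le> 1" using r by (intro power_le_one) auto
  have p0: "0 < (r/2) ^ DIM('a)" using r by simp
  have c1: "(1/2 - \<eta>)^2 \<le> 1/4"
  proof -
    have "(1/2 - \<eta>)^2 \<le> (1/2)^2" using eta by (intro power_mono) auto
    thus ?thesis by (simp add: power2_eq_square)
  qed
  have c0: "0 < (1/2 - \<eta>)^2" using eta by simp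
  have a0: "0 < a" unfolding a_def using p0 c0 by simp
  have a1: "a \<le> 1/2"
  proof -
    have "a \<le> 1 * (1/4)" unfolding a_def using p1 c1 p0 c0 by (intro mult_mono) auto
    thus ?thesis by simp
  qed
  have Bexp: "1 - (1 - (1/2 + 2*\<eta>*(1-\<eta>))) * (r/2) ^ DIM('a) = 1 - 2 * a"
    unfolding a_def by (simp add: power2_eq_square algebra_simps)
  have B0: "0 \<le> 1 - 2 * a" using a1 by simp
  have mB: "measure ?J (Bad N r w i) \<le> (1 - 2*a) ^ (N - 1)" if i: "i < N" for i
  proof -
    have "emeasure ?J (Bad N r w i) \<le> ennreal ((1 - 2*a) ^ (N - 1))"
      using Bad_bound[OF i w_unit r eta q_noise q_meas] unfolding Bexp .
    thus ?thesis using B0 by (simp add: J.emeasure_eq_measure)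
  qed
  have "measure ?J U \<le> (\<Sum>i\<in>{..<N}. measure ?J (Bad N r w i))"
    unfolding U_def by (rule J.finite_measure_subadditive_finite) (auto simp: BadJ)
  also have "\<dots> \<le> (\<Sum>i\<in>{..<N}. (1 - 2*a) ^ (N - 1))" by (intro sum_mono mB) simp
  also have "\<dots> = real N * (1 - 2*a) ^ (N - 1)" by simp
  also have "\<dots> \<le> \<delta>"
    by (rule final_arith[OF a0 a1 delta]) (use N_large in \<open>simp add: a_def\<close>)
  finally have mU: "measure ?J U \<le> \<delta>" .
  have "measure ?J (space ?J - U) = 1 - measure ?J U" by (rule J.prob_compl[OF UJ])
  thus ?thesis unfolding Ev using mU by simp
qed

end
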